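(* Assume fractional Poisson claim arrivals with parameters $\lambda>0$, $0<\alpha\le1$, no discounting ($\delta=0$), and Pareto delays with survival function $\overline W(x)=\big(\frac{\theta}{\theta+x}\big)^\eta$, $x\ge0$, $\theta,\eta>0$. Then for $t>0$, $$\mathbb{E}[Z(t)]=\frac{\mu_1\lambda\theta^\eta}{\Gamma(\alpha)(\theta+t)^{\eta-\alpha}}\int_0^{\frac{t}{\theta+t}}(1-y)^{-\eta}y^{\alpha-1}\,\mathrm{d}y,$$ and as $t\to\infty$, $$\mathbb{E}[Z(t)]\sim\begin{cases}\dfrac{\mu_1\lambda\theta^\eta\Gamma(1-\eta)}{\Gamma(\alpha+1-\eta)}t^{\alpha-\eta}, & 0<\eta<1,\\[2mm] \dfrac{\mu_1\lambda\theta}{\Gamma(\alpha)}t^{\alpha-1}\ln t, & \eta=1,\\[2mm] \dfrac{\mu_1\lambda\theta}{(\eta-1)\Gamma(\alpha)}t^{\alpha-1}, & \eta>1.\end{cases}$$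
   Context: Claims arrive according to the fractional Poisson process with parameters $\lambda>0$, $0<\alpha\le1$: the renewal process with arrival times $T_1<T_2<\dots$ whose renewal function is $m(t)=\lambda t^\alpha/\Gamma(1+\alpha)$. Claim amounts $X_i$ are i.i.d. with $\mu_k:=\mathbb{E}[X^k]$; delays $L_i$ are i.i.d.; arrivals, amounts, delays mutually independent. $Z(t):=\sum_{i\ge1}\mathbf{1}_{\{T_i\le t<T_i+L_i\}}X_i$. $\sim$ means the ratio tends to 1. *)

theory Defs
  imports "HOL-Probability.Probability"
begin

text \<open>Arrival times of a renewal process with interarrival times tau 0, tau 1, ...:
  the (i+1)-th arrival time is tau 0 + ... + tau i (indices start at 0).\<close>
definition arrival_time :: "(nat \<Rightarrow> 'a \<Rightarrow> real) \<Rightarrow> nat \<Rightarrow> 'a \<Rightarrow> real" where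
  "arrival_time tau i \<omega> = (\<Sum>k\<le>i. tau k \<omega>)"

definition renewal_process :: "'a measure \<Rightarrow> (nat \<Rightarrow> 'a \<Rightarrow> real) \<Rightarrow> bool" where
  "renewal_process M tau \<longleftrightarrow>
     prob_space M \<and>
     prob_space.indep_vars M (\<lambda>_. borel) tau UNIV \<and>
     (\<forall>i. distr M borel (tau i) = distr M borel (tau 0)) \<and>
     (\<forall>i. AE \<omega> in M. tau i \<omega> > 0)"

text \<open>Renewal function m(t) = E[N(t)] = sum_i P(T_i <= t).\<close>
definition renewal_function :: "'a measure \<Rightarrow> (nat \<Rightarrow> 'a \<Rightarrow> real) \<Rightarrow> real \<Rightarrow> ennreal" where
  "renewal_function M tau t = (\<Sum>i. emeasure M {\<omega> \<in> space M. arrival_time tau i \<omega> \<le> t})"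

definition fractional_poisson :: "'a measure \<Rightarrow> real \<Rightarrow> real \<Rightarrow> (nat \<Rightarrow> 'a \<Rightarrow> real) \<Rightarrow> bool" where
  "fractional_poisson M lam alpha tau \<longleftrightarrow>
     renewal_process M tau \<and>
     (\<forall>t\<ge>0. renewal_function M tau t = ennreal (lam * t powr alpha / Gamma (1 + alpha)))"

definition Zproc :: "(nat \<Rightarrow> 'a \<Rightarrow> real) \<Rightarrow> (nat \<Rightarrow> 'a \<Rightarrow> real) \<Rightarrow> (nat \<Rightarrow> 'a \<Rightarrow> real)
                      \<Rightarrow> real \<Rightarrow> 'a \<Rightarrow> real" where
  "Zproc tau X L t \<omega> = (\<Sum>i. (if arrival_time tau i \<omega> \<le> t \<and> t < arrival_time tau i \<omega> + L i \<omega>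
                               then X i \<omega> else 0))"

end

theory Submission
  imports Defs "HOL-Real_Asymp.Real_Asymp"
begin

lemma powr_has_integral:
  fixes a b :: real assumes "a > 0" "b \<ge> 0"
  shows "((\<lambda>s. s powr (a - 1)) has_integral b powr a / a) {0..b}"
proof -
  have "((\<lambda>s. s powr (a - 1)) has_integral ((\<lambda>s. s powr a / a) b - (\<lambda>s. s powr a / a) 0)) {0..b}"
  proof (rule fundamental_theorem_of_calculus_interior)
    show "continuous_on {0..b} (\<lambda>s. s powr a / a)"
      using assms by (intro continuous_intros continuous_on_powr') auto
    fix x assume x: "x \<in> {0<..<b}"
    have "((\<lambda>s. s powr a / a) has_real_derivative (a * x powr (a - 1)) / a) (at x)"
      using x by (auto intro!: derivative_eq_intros)
    then show "((\<lambda>s. s powr a / a) has_vector_derivative x powr (a - 1)) (at x)"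
      using assms by (simp add: has_real_derivative_iff_has_vector_derivative)
  qed (use assms in auto)
  then show ?thesis using assms by simp
qed

lemma powr_nn_integral:
  fixes a b :: real assumes "a > 0" "b \<ge> 0"
  shows "(\<integral>\<^sup>+s. indicator {0..b} s * ennreal (s powr (a - 1)) \<partial>lborel) = ennreal (b powr a / a)"
proof -
  have "(\<integral>\<^sup>+s. ennreal (indicator {0..b} s * s powr (a - 1)) \<partial>lborel) = ennreal (b powr a / a)"
    by (rule nn_integral_has_integral_lebesgue[OF _ powr_has_integral[OF assms]]) auto
  then show ?thesis by (simp add: indicator_mult_ennreal mult.commute)
qed

definition gI :: "real \<Rightarrow> real \<Rightarrow> real \<Rightarrow> real" where
  "gI a e y = (1 - y) powr (-e) * y powr (a - 1)"

definition JI :: "real \<Rightarrow> real \<Rightarrow> real \<Rightarrow> real" where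
  "JI a e u = integral {0..u} (gI a e)"

lemma gI_nonneg: "gI a e y \<ge> 0" by (simp add: gI_def)

lemma gI_cont: "0 < c \<Longrightarrow> d < 1 \<Longrightarrow> continuous_on {c..d} (gI a e)"
  unfolding gI_def by (intro continuous_intros) auto

lemma gI_bound:
  assumes "a > 0" "e > 0" "0 \<le> y" "y \<le> u" "u < 1"
  shows "gI a e y \<le> (1 - u) powr (-e) * y powr (a - 1)"
  unfolding gI_def using assms
  by (intro mult_right_mono) (auto intro!: powr_mono2')


lemma gI_set_integrable:
  assumes "a > 0" "e > 0" "u < 1"
  shows "set_integrable lborel {0..u} (gI a e)"
proof (cases "u \<ge> 0")
  case False
  then show ?thesis by (simp add: set_integrable_def)
next
  case True
  have "(\<integral>\<^sup>+y. indicator {0..u} y * gI a e y \<partial>lborel)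
      \<le> (\<integral>\<^sup>+y. ennreal ((1 - u) powr (-e)) * (indicator {0..u} y * ennreal (y powr (a - 1))) \<partial>lborel)"
  proof (intro nn_integral_mono)
    fix y show "ennreal (indicator {0..u} y * gI a e y) \<le> ennreal ((1 - u) powr (-e)) * (indicator {0..u} y * ennreal (y powr (a - 1)))"
      using gI_bound[OF assms(1,2) _ _ assms(3), of y]
      by (auto simp: indicator_def ennreal_mult[symmetric] intro!: ennreal_leI)
  qed
  also have "\<dots> = ennreal ((1 - u) powr (-e)) * ennreal (u powr a / a)"
    by (subst nn_integral_cmult) (auto simp: powr_nn_integral assms True)
  also have "\<dots> < \<infinity>" by (simp add: ennreal_mult_less_top)
  finally show ?thesis
    unfolding set_integrable_def
    by (intro integrableI_nonneg) (auto simp: gI_def)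
qed

lemma gI_integrable_on:
  assumes "a > 0" "e > 0" "u < 1"
  shows "gI a e integrable_on {0..u}"
  using set_borel_integral_eq_integral(1)[OF gI_set_integrable[OF assms]] .

lemma LBINT_eq_JI:
  assumes "a > 0" "e > 0" "0 \<le> u" "u < 1"
  shows "(LBINT y=0..u. (1 - y) powr (- e) * y powr (a - 1)) = JI a e u"
  using interval_integral_eq_integral[OF assms(3) gI_set_integrable[OF assms(1,2,4)]]
  by (simp add: JI_def gI_def zero_ereal_def)

lemma JI_deriv:
  assumes "a > 0" "e > 0" "0 < u" "u < 1"
  shows "(JI a e has_real_derivative gI a e u) (at u)"
proof -
  define c where "c = u / 2"
  define d where "d = (u + 1) / 2"
  have c: "0 < c" "c < u" and d: "u < d" "d < 1" using assms by (auto simp: c_def d_def)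
  have "((\<lambda>x. integral {c..x} (gI a e)) has_real_derivative gI a e u) (at u within {c..d})"
    using c d by (intro integral_has_real_derivative gI_cont) auto
  then have D: "((\<lambda>x. integral {c..x} (gI a e)) has_real_derivative gI a e u) (at u)"
    using c d by (simp add: at_within_Icc_at)
  have "((\<lambda>x. JI a e c + integral {c..x} (gI a e)) has_real_derivative gI a e u) (at u)"
    using D by (auto intro!: derivative_eq_intros)
  then show ?thesis
  proof (rule has_field_derivative_transform_within_open[where S="{c<..<d}"])
    fix x assume x: "x \<in> {c<..<d}"
    have I: "gI a e integrable_on {0..x}" by (rule gI_integrable_on) (use x d assms in auto)
    have "integral {0..c} (gI a e) + integral {c..x} (gI a e) = integral {0..x} (gI a e)"
      by (rule Henstock_Kurzweil_Integration.integral_combine[OF _ _ I]) (use x c in auto)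
    then show "JI a e c + integral {c..x} (gI a e) = JI a e x" by (simp add: JI_def)
  qed (use c d in auto)
qed

lemma JI_lim_lt1:
  assumes "a > 0" "e > 0" "e < 1"
  shows "(JI a e \<longlongrightarrow> Beta a (1 - e)) (at_left 1)"
proof -
  have eq: "(\<lambda>t. t powr (a - 1) * (1 - t) powr ((1 - e) - 1)) = gI a e"
    by (auto simp: gI_def fun_eq_iff mult.commute)
  have int: "gI a e integrable_on {0..1}"
    using integrable_Beta'[of a "1 - e"] assms unfolding eq by simp
  have B: "JI a e 1 = Beta a (1 - e)"
    using has_integral_Beta_real[of a "1 - e"] assms unfolding eq JI_def by (simp add: integral_unique)
  have "continuous_on {0..1} (JI a e)"
    unfolding JI_def by (rule indefinite_integral_continuous_1[OF int])
  then have "(JI a e \<longlongrightarrow> JI a e 1) (at 1 within {0..1})"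
    by (simp add: continuous_on_def)
  then show ?thesis by (simp add: B at_within_Icc_at_left)
qed

lemma ev01: "eventually (\<lambda>x. x \<in> {0<..<1}) (at_left (1::real))"
  by (rule eventually_at_left_real) simp

lemma ratio_lim: "((\<lambda>u. gI a e u / (1 - u) powr (-e)) \<longlongrightarrow> 1) (at_left 1)"
proof -
  have "((\<lambda>u. u powr (a - 1)) \<longlongrightarrow> 1 powr (a - 1)) (at_left 1)"
    by (intro tendsto_intros) auto
  then have "((\<lambda>u. u powr (a - 1)) \<longlongrightarrow> 1) (at_left 1)" by simp
  moreover have "eventually (\<lambda>u. u powr (a - 1) = gI a e u / (1 - u) powr (-e)) (at_left 1)"
    using ev01
    by eventually_elim (auto simp: gI_def)
  ultimately show ?thesis by (rule Lim_transform_eventually)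
qed

lemma JI_lim_gt1:
  assumes "a > 0" "e > 1"
  shows "((\<lambda>u. JI a e u / ((1 - u) powr (1 - e) / (e - 1))) \<longlongrightarrow> 1) (at_left 1)"
proof (rule lhopital_left_at_top[where g' = "\<lambda>u. (1 - u) powr (-e)" and f' = "gI a e"])
  show "LIM x at_left 1. (1 - x) powr (1 - e) / (e - 1) :> at_top"
    using assms by real_asymp
  show "\<forall>\<^sub>F x in at_left 1. (1 - x) powr - e \<noteq> 0"
    using ev01 by eventually_elim auto
  show "\<forall>\<^sub>F x in at_left 1. (JI a e has_real_derivative gI a e x) (at x)"
    using ev01 by eventually_elim (use assms in \<open>auto intro!: JI_deriv\<close>)
  show "\<forall>\<^sub>F x in at_left 1. ((\<lambda>x. (1 - x) powr (1 - e) / (e - 1)) has_real_derivative (1 - x) powr - e) (at x)"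
    using ev01
  proof eventually_elim
    case (elim x)
    then have "((\<lambda>x. (1 - x) powr (1 - e) / (e - 1)) has_real_derivative ((1 - e) * (1 - x) powr (1 - e - 1) * (-1)) / (e - 1)) (at x)"
      using assms by (auto intro!: derivative_eq_intros)
    moreover have "((1 - e) * (1 - x) powr (1 - e - 1) * (-1)) / (e - 1) = (1 - x) powr - e"
    proof -
      have "e - 1 \<noteq> 0" using assms by simp
      then show ?thesis by (simp add: field_simps)
    qed
    ultimately show ?case by simp
  qed
qed (rule ratio_lim)

lemma JI_lim_eq1:
  assumes "a > 0"
  shows "((\<lambda>u. JI a 1 u / (- ln (1 - u))) \<longlongrightarrow> 1) (at_left 1)"
proof (rule lhopital_left_at_top[where g' = "\<lambda>u. (1 - u) powr (-1)" and f' = "gI a 1"])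
  have L: "filterlim (\<lambda>x. 1 - x) (at_right 0) (at_left (1::real))"
    by real_asymp
  have "LIM x at_left 1. ln (1 - x::real) :> at_bot"
    using filterlim_compose[OF ln_at_0 L] by (simp add: filterlim_def)
  then show "LIM x at_left 1. - ln (1 - x::real) :> at_top"
    by (rule filterlim_uminus_at_bot[THEN iffD1])
  show "\<forall>\<^sub>F x in at_left 1. (1 - x::real) powr - 1 \<noteq> 0"
    by (rule eventually_mono[OF ev01]) auto
  show "\<forall>\<^sub>F x in at_left 1. (JI a 1 has_real_derivative gI a 1 x) (at x)"
    using ev01 by eventually_elim (use assms in \<open>auto intro!: JI_deriv\<close>)
  show "\<forall>\<^sub>F x in at_left 1. ((\<lambda>x. - ln (1 - x)) has_real_derivative (1 - x::real) powr - 1) (at x)"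
    using ev01
  proof eventually_elim
    case (elim x)
    then have "((\<lambda>x. - ln (1 - x)) has_real_derivative - ((-1) / (1 - x))) (at x)"
      by (auto intro!: derivative_eq_intros)
    moreover have "- ((-1) / (1 - x)) = (1 - x) powr - 1"
      using elim by (simp add: powr_minus divide_simps)
    ultimately show ?case by simp
  qed
qed (rule ratio_lim)


lemma alg_gt1:
  fixes a e th t J :: real
  assumes "th > 0" "t > 0" "e > 1" "Gamma a > 0"
  shows "(th powr e / (Gamma a * (th + t) powr (e - a)) * J) / (th / ((e - 1) * Gamma a) * t powr (a - 1))
       = J / ((1 - t / (th + t)) powr (1 - e) / (e - 1)) * ((th + t) / t) powr (a - 1)"
proof -
  define c where "c = th + t"
  have c: "c > 0" using assms by (simp add: c_def)
  have u: "1 - t / (th + t) = th / c" using c by (simp add: field_simps c_def)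
  have e1: "c powr (e - a) = c powr e / c powr a" by (simp add: powr_diff)
  have e2: "t powr (a - 1) = t powr a / t" using assms by (simp add: powr_diff)
  have e3: "(1 - t / (th + t)) powr (1 - e) = (th / th powr e) / (c / c powr e)"
    using assms c unfolding u by (simp add: powr_divide powr_diff)
  have e4: "(c / t) powr (a - 1) = (c powr a / c) / (t powr a / t)"
    using assms c by (simp add: powr_divide powr_diff)
  have p: "th powr e > 0" "c powr e > 0" "c powr a > 0" "t powr a > 0" "e - 1 > 0"
    using assms c by auto
  show ?thesis unfolding e3 unfolding c_def[symmetric] e1 e2 e4
    using assms c p by (simp add: field_simps)
qed

lemma alg_eq1:
  fixes a th t J :: real
  assumes "th > 0" "t > 1" "Gamma a > 0"
  shows "(th powr 1 / (Gamma a * (th + t) powr (1 - a)) * J) / (th / Gamma a * t powr (a - 1) * ln t)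
       = J / (- ln (1 - t / (th + t))) * ((th + t) / t) powr (a - 1) * (ln ((th + t) / th) / ln t)"
proof -
  define c where "c = th + t"
  have c: "c > 0" using assms by (simp add: c_def)
  have u: "1 - t / (th + t) = th / c" using c by (simp add: field_simps c_def)
  have l: "- ln (1 - t / (th + t)) = ln (c / th)"
  proof -
    show ?thesis unfolding u using assms c by (simp add: ln_div[of c th] ln_div[of th c])
  qed
  have e1: "c powr (1 - a) = c / c powr a" using c by (simp add: powr_diff)
  have e2: "t powr (a - 1) = t powr a / t" using assms by (simp add: powr_diff)
  have e4: "(c / t) powr (a - 1) = (c powr a / c) / (t powr a / t)"
    using assms c by (simp add: powr_divide powr_diff)
  have p: "c powr a > 0" "t powr a > 0" "ln t > 0" "ln (c / th) > 0"
    using assms c by (auto simp: c_def)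
  show ?thesis unfolding l unfolding c_def[symmetric] e1 e2 e4
    using assms c p by (simp add: field_simps)
qed

lemma alg_lt1:
  fixes a e th t J :: real
  assumes "th > 0" "t > 0" "Gamma a > 0" "Gamma (1 - e) \<noteq> 0" "Gamma (a + 1 - e) \<noteq> 0"
    "B = Gamma a * Gamma (1 - e) / Gamma (a + 1 - e)"
  shows "(th powr e / (Gamma a * (th + t) powr (e - a)) * J) / (th powr e * Gamma (1 - e) / Gamma (a + 1 - e) * t powr (a - e))
       = J / B * ((th + t) / t) powr (a - e)"
proof -
  define c where "c = th + t"
  have c: "c > 0" using assms by (simp add: c_def)
  have e1: "c powr (e - a) = c powr e / c powr a" by (simp add: powr_diff)
  have e2: "t powr (a - e) = t powr a / t powr e" using assms by (simp add: powr_diff)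
  have e4: "(c / t) powr (a - e) = (c powr a / c powr e) / (t powr a / t powr e)"
    using assms c by (simp add: powr_divide powr_diff)
  have p: "th powr e > 0" "c powr e > 0" "c powr a > 0" "t powr a > 0" "t powr e > 0"
    using assms c by auto
  show ?thesis unfolding c_def[symmetric] e1 e2 e4 assms(6)
    using assms c p by (simp add: field_simps)
qed

lemma asymp_from_ratio:
  fixes F G F1 G1 :: "real \<Rightarrow> real"
  assumes "((\<lambda>t. F1 t / G1 t) \<longlongrightarrow> 1) at_top"
    and "eventually (\<lambda>t. F t = C * F1 t) at_top" and "eventually (\<lambda>t. G t = C * G1 t) at_top"
  shows "F \<sim>[at_top] G"
proof -
  have "(\<lambda>t. C * F1 t) \<sim>[at_top] (\<lambda>t. C * G1 t)"
    by (intro asymp_equiv_mult asymp_equiv_refl asymp_equivI' assms(1))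
  then show ?thesis
    by (rule asymp_equiv_transfer) (use assms(2,3) in \<open>auto elim: eventually_mono\<close>)
qed

lemma u_lim: "(th::real) > 0 \<Longrightarrow> filterlim (\<lambda>t. t / (th + t)) (at_left 1) at_top"
  by real_asymp

lemma pow_lim: "(th::real) > 0 \<Longrightarrow> ((\<lambda>t. ((th + t) / t) powr p) \<longlongrightarrow> 1) at_top"
  by real_asymp

lemma ln_lim: "(th::real) > 0 \<Longrightarrow> ((\<lambda>t. ln ((th + t) / th) / ln t) \<longlongrightarrow> 1) at_top"
  by real_asymp

lemma asymp_part:
  fixes F :: "real \<Rightarrow> real" and mu1 lam a th e :: real
  assumes a: "a > 0" and th: "th > 0" and e: "e > 0"
  and F: "\<And>t. t > 0 \<Longrightarrow> F t = mu1 * lam * th powr e / (Gamma a * (th + t) powr (e - a)) * JI a e (t / (th + t))"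
  shows "(e < 1 \<longrightarrow> F \<sim>[at_top] (\<lambda>t. mu1 * lam * th powr e * Gamma (1 - e) / Gamma (a + 1 - e) * t powr (a - e)))
       \<and> (e = 1 \<longrightarrow> F \<sim>[at_top] (\<lambda>t. mu1 * lam * th / Gamma a * t powr (a - 1) * ln t))
       \<and> (e > 1 \<longrightarrow> F \<sim>[at_top] (\<lambda>t. mu1 * lam * th / ((e - 1) * Gamma a) * t powr (a - 1)))"
proof (intro conjI impI)
  define F1 where "F1 t = th powr e / (Gamma a * (th + t) powr (e - a)) * JI a e (t / (th + t))" for t
  have FF: "eventually (\<lambda>t. F t = (mu1 * lam) * F1 t) at_top"
    using eventually_gt_at_top[of 0] by eventually_elim (simp add: F F1_def)
  have U: "filterlim (\<lambda>t. t / (th + t)) (at_left 1) at_top" using u_lim[OF th] .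
  have Ga: "Gamma a > 0" using a by (simp add: Gamma_real_pos)
  {
    assume e1: "e < 1"
    define B where "B = Gamma a * Gamma (1 - e) / Gamma (a + 1 - e)"
    have G1: "Gamma (1 - e) > 0" "Gamma (a + 1 - e) > 0" using e1 a by (auto intro: Gamma_real_pos)
    have BB: "Beta a (1 - e) = B" by (simp add: Beta_def B_def add_diff_eq)
    have B0: "B \<noteq> 0" using G1 Ga by (simp add: B_def)
    have L: "((\<lambda>t. JI a e (t / (th + t))) \<longlongrightarrow> B) at_top"
      using filterlim_compose[OF JI_lim_lt1[OF a e e1] U] by (simp add: BB)
    have "((\<lambda>t. JI a e (t / (th + t)) / B * ((th + t) / t) powr (a - e)) \<longlongrightarrow> B / B * 1) at_top"
      by (intro tendsto_intros L pow_lim th B0)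
    then have R: "((\<lambda>t. JI a e (t / (th + t)) / B * ((th + t) / t) powr (a - e)) \<longlongrightarrow> 1) at_top"
      using B0 by simp
    show "F \<sim>[at_top] (\<lambda>t. mu1 * lam * th powr e * Gamma (1 - e) / Gamma (a + 1 - e) * t powr (a - e))"
    proof (rule asymp_from_ratio[OF _ FF])
      show "((\<lambda>t. F1 t / (th powr e * Gamma (1 - e) / Gamma (a + 1 - e) * t powr (a - e))) \<longlongrightarrow> 1) at_top"
        using R
      proof (rule Lim_transform_eventually)
        show "\<forall>\<^sub>F t in at_top. JI a e (t / (th + t)) / B * ((th + t) / t) powr (a - e) =
                 F1 t / (th powr e * Gamma (1 - e) / Gamma (a + 1 - e) * t powr (a - e))"
          using eventually_gt_at_top[of 0]
          by eventually_elim (unfold F1_def, rule alg_lt1[symmetric], use th Ga G1 in \<open>auto simp: B_def\<close>)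
      qed
    qed simp
  }
  {
    assume e1: "e > 1"
    have L: "((\<lambda>t. JI a e (t / (th + t)) / ((1 - t / (th + t)) powr (1 - e) / (e - 1))) \<longlongrightarrow> 1) at_top"
      using filterlim_compose[OF JI_lim_gt1[OF a e1] U] by simp
    have "((\<lambda>t. JI a e (t / (th + t)) / ((1 - t / (th + t)) powr (1 - e) / (e - 1)) * ((th + t) / t) powr (a - 1)) \<longlongrightarrow> 1 * 1) at_top"
      by (intro tendsto_intros L pow_lim th)
    then have R: "((\<lambda>t. JI a e (t / (th + t)) / ((1 - t / (th + t)) powr (1 - e) / (e - 1)) * ((th + t) / t) powr (a - 1)) \<longlongrightarrow> 1) at_top"
      by simp
    show "F \<sim>[at_top] (\<lambda>t. mu1 * lam * th / ((e - 1) * Gamma a) * t powr (a - 1))"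
    proof (rule asymp_from_ratio[OF _ FF])
      show "((\<lambda>t. F1 t / (th / ((e - 1) * Gamma a) * t powr (a - 1))) \<longlongrightarrow> 1) at_top"
        using R
      proof (rule Lim_transform_eventually)
        show "\<forall>\<^sub>F t in at_top. JI a e (t / (th + t)) / ((1 - t / (th + t)) powr (1 - e) / (e - 1)) * ((th + t) / t) powr (a - 1) =
                 F1 t / (th / ((e - 1) * Gamma a) * t powr (a - 1))"
          using eventually_gt_at_top[of 0]
          by eventually_elim (unfold F1_def, rule alg_gt1[symmetric], use th Ga e1 in \<open>auto\<close>)
      qed
    qed simp
  }
  {
    assume e1: "e = 1"
    have L: "((\<lambda>t. JI a 1 (t / (th + t)) / (- ln (1 - t / (th + t)))) \<longlongrightarrow> 1) at_top"
      using filterlim_compose[OF JI_lim_eq1[OF a] U] by simp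
    have "((\<lambda>t. JI a 1 (t / (th + t)) / (- ln (1 - t / (th + t))) * ((th + t) / t) powr (a - 1) * (ln ((th + t) / th) / ln t)) \<longlongrightarrow> 1 * 1 * 1) at_top"
      by (intro tendsto_intros L pow_lim ln_lim th)
    then have R: "((\<lambda>t. JI a 1 (t / (th + t)) / (- ln (1 - t / (th + t))) * ((th + t) / t) powr (a - 1) * (ln ((th + t) / th) / ln t)) \<longlongrightarrow> 1) at_top"
      by simp
    show "F \<sim>[at_top] (\<lambda>t. mu1 * lam * th / Gamma a * t powr (a - 1) * ln t)"
    proof (rule asymp_from_ratio[OF _ FF])
      show "((\<lambda>t. F1 t / (th / Gamma a * t powr (a - 1) * ln t)) \<longlongrightarrow> 1) at_top"
        using R
      proof (rule Lim_transform_eventually)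
        show "\<forall>\<^sub>F t in at_top. JI a 1 (t / (th + t)) / (- ln (1 - t / (th + t))) * ((th + t) / t) powr (a - 1) * (ln ((th + t) / th) / ln t) =
                 F1 t / (th / Gamma a * t powr (a - 1) * ln t)"
          using eventually_gt_at_top[of 1]
          by eventually_elim (unfold F1_def e1, rule alg_eq1[symmetric], use th Ga in \<open>auto\<close>)
      qed
    qed simp
  }
qed


lemma indep_blocks:
  fixes V :: "'i \<Rightarrow> 'a \<Rightarrow> real"
  assumes "prob_space M" "prob_space.indep_vars M (\<lambda>_. borel) V I" "K1 \<inter> K2 = {}" "K1 \<subseteq> I" "K2 \<subseteq> I"
    "Y1 \<in> PiM K1 (\<lambda>_. borel) \<rightarrow>\<^sub>M (borel :: real measure)" "Y2 \<in> PiM K2 (\<lambda>_. borel) \<rightarrow>\<^sub>M (borel :: real measure)"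
  shows "prob_space.indep_var M borel (\<lambda>\<omega>. Y1 (restrict (\<lambda>k. V k \<omega>) K1)) borel (\<lambda>\<omega>. Y2 (restrict (\<lambda>k. V k \<omega>) K2))"
  using prob_space.indep_var_compose[OF assms(1) prob_space.indep_var_restrict[OF assms(1,2,3,4,5)] assms(6,7)]
  by (simp add: comp_def)

locale zsetup =
  fixes M :: "'a measure" and tau X L :: "nat \<Rightarrow> 'a \<Rightarrow> real"
    and lam alpha theta eta mu1 :: real
  assumes P: "prob_space M"
    and lam: "lam > 0" and al: "0 < alpha" "alpha \<le> 1"
    and th: "theta > 0" and et: "eta > 0"
    and FP: "fractional_poisson M lam alpha tau"
    and IND: "prob_space.indep_vars M (\<lambda>_. borel)
           (\<lambda>(j::nat, i). if j = 0 then tau i else if j = 1 then X i else L i) ({0,1,2} \<times> UNIV)"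
    and XD: "\<And>i. distr M borel (X i) = distr M borel (X 0)"
    and XI: "integrable M (X 0)" and MU: "mu1 = integral\<^sup>L M (X 0)"
    and LD: "\<And>i x. x \<ge> 0 \<Longrightarrow>
           measure M {\<omega> \<in> space M. L i \<omega> > x} = (theta / (theta + x)) powr eta"
begin

interpretation prob_space M by (rule P)

lemma rv_V: "(\<lambda>(j::nat, i). if j = 0 then tau i else if j = 1 then X i else L i) k \<in> borel_measurable M"
  if "k \<in> {0,1,2} \<times> UNIV" for k
  using IND that unfolding indep_vars_def by blast

lemma meas_tau[measurable]: "tau i \<in> borel_measurable M"
  using rv_V[of "(0, i)"] by simp
lemma meas_X[measurable]: "X i \<in> borel_measurable M"
  using rv_V[of "(1, i)"] by simp
lemma meas_L[measurable]: "L i \<in> borel_measurable M"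
  using rv_V[of "(2, i)"] by simp
lemma meas_T[measurable]: "arrival_time tau i \<in> borel_measurable M"
  unfolding arrival_time_def by measurable

lemma indep_X_TL:
  fixes \<phi> :: "real \<Rightarrow> real" and g :: "real \<times> real \<Rightarrow> real"
  assumes [measurable]: "\<phi> \<in> borel_measurable borel" "g \<in> borel_measurable borel"
  shows "indep_var borel (\<lambda>\<omega>. \<phi> (X i \<omega>)) borel (\<lambda>\<omega>. g (arrival_time tau i \<omega>, L i \<omega>))"
proof -
  let ?V = "\<lambda>(j::nat, i). if j = 0 then tau i else if j = 1 then X i else L i"
  define K1 where "K1 = {(1::nat, i)}"
  define K2 where "K2 = {0::nat} \<times> {..i} \<union> {(2, i)}"
  have "indep_var borel (\<lambda>\<omega>. (\<lambda>f. \<phi> (f (1, i))) (restrict (\<lambda>k. ?V k \<omega>) K1))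
          borel (\<lambda>\<omega>. (\<lambda>f. g (\<Sum>k\<le>i. f (0, k), f (2, i))) (restrict (\<lambda>k. ?V k \<omega>) K2))"
  proof (rule indep_blocks[OF P IND])
    show "K1 \<inter> K2 = {}" "K1 \<subseteq> {0, 1, 2} \<times> UNIV" "K2 \<subseteq> {0, 1, 2} \<times> UNIV"
      by (auto simp: K1_def K2_def)
    show "(\<lambda>f. \<phi> (f (1, i))) \<in> Pi\<^sub>M K1 (\<lambda>_. borel) \<rightarrow>\<^sub>M borel"
      unfolding K1_def by measurable
    show "(\<lambda>f. g (\<Sum>k\<le>i. f (0, k), f (2, i))) \<in> Pi\<^sub>M K2 (\<lambda>_. borel) \<rightarrow>\<^sub>M borel"
      unfolding K2_def by measurable
  qed
  moreover have "(\<lambda>\<omega>. (\<lambda>f. \<phi> (f (1, i))) (restrict (\<lambda>k. ?V k \<omega>) K1)) = (\<lambda>\<omega>. \<phi> (X i \<omega>))"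
    by (simp add: K1_def)
  moreover have "(\<lambda>\<omega>. (\<lambda>f. g (\<Sum>k\<le>i. f (0, k), f (2, i))) (restrict (\<lambda>k. ?V k \<omega>) K2)) = (\<lambda>\<omega>. g (arrival_time tau i \<omega>, L i \<omega>))"
    by (simp add: K2_def arrival_time_def)
  ultimately show ?thesis by simp
qed

lemma indep_T_L:
  shows "indep_var borel (arrival_time tau i) borel (L i)"
proof -
  let ?V = "\<lambda>(j::nat, i). if j = 0 then tau i else if j = 1 then X i else L i"
  define K1 where "K1 = {0::nat} \<times> {..i}"
  define K2 where "K2 = {(2::nat, i)}"
  have "indep_var borel (\<lambda>\<omega>. (\<lambda>f. \<Sum>k\<le>i. f (0, k)) (restrict (\<lambda>k. ?V k \<omega>) K1))
          borel (\<lambda>\<omega>. (\<lambda>f. f (2, i)) (restrict (\<lambda>k. ?V k \<omega>) K2))"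
  proof (rule indep_blocks[OF P IND])
    show "K1 \<inter> K2 = {}" "K1 \<subseteq> {0, 1, 2} \<times> UNIV" "K2 \<subseteq> {0, 1, 2} \<times> UNIV"
      by (auto simp: K1_def K2_def)
    show "(\<lambda>f. \<Sum>k\<le>i. f (0, k) :: real) \<in> Pi\<^sub>M K1 (\<lambda>_. borel) \<rightarrow>\<^sub>M borel"
      unfolding K1_def by measurable
    show "(\<lambda>f. f (2, i)) \<in> Pi\<^sub>M K2 (\<lambda>_. borel) \<rightarrow>\<^sub>M borel"
      unfolding K2_def by measurable
  qed
  moreover have "(\<lambda>\<omega>. (\<lambda>f. \<Sum>k\<le>i. f (0, k)) (restrict (\<lambda>k. ?V k \<omega>) K1)) = arrival_time tau i"
    by (simp add: K1_def arrival_time_def fun_eq_iff)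
  moreover have "(\<lambda>\<omega>. (\<lambda>f. f (2, i)) (restrict (\<lambda>k. ?V k \<omega>) K2)) = L i"
    by (simp add: K2_def fun_eq_iff)
  ultimately show ?thesis by simp
qed


definition Wb :: "real \<Rightarrow> real \<Rightarrow> real" where
  "Wb t s = (theta / (theta + (t - s))) powr eta"

lemma emeasure_A:
  "emeasure M {\<omega>\<in>space M. arrival_time tau i \<omega> \<le> t \<and> t < arrival_time tau i \<omega> + L i \<omega>}
    = (\<integral>\<^sup>+s. indicator {..t} s * ennreal (Wb t s) \<partial>distr M borel (arrival_time tau i))"
proof -
  let ?T = "arrival_time tau i"
  define S where "S = {p::real\<times>real. fst p \<le> t \<and> t < fst p + snd p}"
  have S: "S \<in> sets (borel \<Otimes>\<^sub>M borel)"
  proof -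
    have "{p::real\<times>real. fst p \<le> t} \<in> sets borel"
      by (intro borel_closed closed_Collect_le continuous_intros)
    moreover have "{p::real\<times>real. t < fst p + snd p} \<in> sets borel"
      by (intro borel_open open_Collect_less continuous_intros)
    ultimately have "S \<in> sets borel" unfolding S_def by (simp add: Collect_conj_eq)
    then show ?thesis unfolding borel_prod .
  qed
  have J: "distr M borel ?T \<Otimes>\<^sub>M distr M borel (L i) = distr M (borel \<Otimes>\<^sub>M borel) (\<lambda>\<omega>. (?T \<omega>, L i \<omega>))"
    using indep_var_distribution_eq indep_T_L by blast
  interpret LL: prob_space "distr M borel (L i)" by (rule prob_space_distr) simp
  have "emeasure M {\<omega>\<in>space M. ?T \<omega> \<le> t \<and> t < ?T \<omega> + L i \<omega>}
      = emeasure (distr M (borel \<Otimes>\<^sub>M borel) (\<lambda>\<omega>. (?T \<omega>, L i \<omega>))) S"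
    by (subst emeasure_distr[OF _ S]) (auto simp: S_def intro!: arg_cong[where f="emeasure M"])
  also have "\<dots> = emeasure (distr M borel ?T \<Otimes>\<^sub>M distr M borel (L i)) S"
    by (simp add: J)
  also have "\<dots> = (\<integral>\<^sup>+s. emeasure (distr M borel (L i)) (Pair s -` S) \<partial>distr M borel ?T)"
    by (rule LL.emeasure_pair_measure_alt) (simp add: S)
  also have "\<dots> = (\<integral>\<^sup>+s. indicator {..t} s * ennreal (Wb t s) \<partial>distr M borel ?T)"
  proof (rule nn_integral_cong)
    fix s
    show "emeasure (distr M borel (L i)) (Pair s -` S) = indicator {..t} s * ennreal (Wb t s)"
    proof (cases "s \<le> t")
      case True
      have "Pair s -` S = {t - s<..}" using True by (auto simp: S_def)
      moreover have "emeasure (distr M borel (L i)) {t - s<..} = emeasure M {\<omega> \<in> space M. L i \<omega> > t - s}"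
        by (subst emeasure_distr) (auto intro!: arg_cong[where f="emeasure M"])
      moreover have "\<dots> = ennreal (Wb t s)"
        using LD[of "t - s" i] True by (simp add: emeasure_eq_measure Wb_def)
      ultimately show ?thesis using True by simp
    next
      case False
      then have "Pair s -` S = {}" by (auto simp: S_def)
      then show ?thesis using False by simp
    qed
  qed
  finally show ?thesis .
qed


definition SS :: "real \<Rightarrow> (real \<times> real) set" where
  "SS t = {p. fst p \<le> t \<and> t < fst p + snd p}"

lemma SS_borel[measurable]: "SS t \<in> sets borel"
proof -
  have "{p::real\<times>real. fst p \<le> t} \<in> sets borel"
    by (intro borel_closed closed_Collect_le continuous_intros)
  moreover have "{p::real\<times>real. t < fst p + snd p} \<in> sets borel"
    by (intro borel_open open_Collect_less continuous_intros)
  ultimately show ?thesis unfolding SS_def by (simp add: Collect_conj_eq)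
qed

definition Aset :: "real \<Rightarrow> nat \<Rightarrow> 'a set" where
  "Aset t i = {\<omega>\<in>space M. arrival_time tau i \<omega> \<le> t \<and> t < arrival_time tau i \<omega> + L i \<omega>}"

lemma Aset_sets[measurable]: "Aset t i \<in> sets M"
  unfolding Aset_def by measurable

lemma EXA:
  fixes \<phi> :: "real \<Rightarrow> real"
  assumes [measurable]: "\<phi> \<in> borel_measurable borel" and int0: "integrable M (\<lambda>\<omega>. \<phi> (X 0 \<omega>))"
  shows "integrable M (\<lambda>\<omega>. \<phi> (X i \<omega>) * indicator (Aset t i) \<omega>)"
    and "integral\<^sup>L M (\<lambda>\<omega>. \<phi> (X i \<omega>) * indicator (Aset t i) \<omega>) = integral\<^sup>L M (\<lambda>\<omega>. \<phi> (X 0 \<omega>)) * measure M (Aset t i)"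
proof -
  let ?g = "\<lambda>\<omega>. indicator (SS t) (arrival_time tau i \<omega>, L i \<omega>) :: real"
  have ind: "indep_var borel (\<lambda>\<omega>. \<phi> (X i \<omega>)) borel ?g"
    by (rule indep_X_TL) measurable
  have inti: "integrable M (\<lambda>\<omega>. \<phi> (X i \<omega>))"
  proof -
    have "integrable (distr M borel (X 0)) \<phi>" using int0 by (subst integrable_distr_eq) auto
    then have "integrable (distr M borel (X i)) \<phi>" by (simp add: XD[of i])
    then show ?thesis by (subst (asm) integrable_distr_eq) auto
  qed
  have EXi: "integral\<^sup>L M (\<lambda>\<omega>. \<phi> (X i \<omega>)) = integral\<^sup>L M (\<lambda>\<omega>. \<phi> (X 0 \<omega>))"
  proof -
    have "integral\<^sup>L M (\<lambda>\<omega>. \<phi> (X i \<omega>)) = integral\<^sup>L (distr M borel (X i)) \<phi>"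
      by (subst integral_distr) auto
    also have "\<dots> = integral\<^sup>L (distr M borel (X 0)) \<phi>" by (simp add: XD[of i])
    also have "\<dots> = integral\<^sup>L M (\<lambda>\<omega>. \<phi> (X 0 \<omega>))" by (subst integral_distr) auto
    finally show ?thesis .
  qed
  have intg: "integrable M ?g"
    by (rule integrable_const_bound[where B=1]) (auto simp: indicator_def)
  have eqg: "\<And>\<omega>. \<omega> \<in> space M \<Longrightarrow> ?g \<omega> = indicator (Aset t i) \<omega>"
    by (auto simp: indicator_def Aset_def SS_def)
  have Eg: "integral\<^sup>L M ?g = measure M (Aset t i)"
  proof -
    have "integral\<^sup>L M ?g = integral\<^sup>L M (indicator (Aset t i) :: 'a \<Rightarrow> real)"
      by (rule Bochner_Integration.integral_cong) (auto simp: eqg)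
    then show ?thesis by simp
  qed
  have int2: "integrable M (\<lambda>\<omega>. \<phi> (X i \<omega>) * ?g \<omega>)"
    using indep_var_integrable[OF ind inti intg] .
  have eq2: "\<And>\<omega>. \<omega> \<in> space M \<Longrightarrow> \<phi> (X i \<omega>) * ?g \<omega> = \<phi> (X i \<omega>) * indicator (Aset t i) \<omega>"
    by (simp add: eqg)
  show "integrable M (\<lambda>\<omega>. \<phi> (X i \<omega>) * indicator (Aset t i) \<omega>)"
    using int2 by (rule Bochner_Integration.integrable_cong[OF refl, THEN iffD1, rotated]) (simp add: eq2)
  have "integral\<^sup>L M (\<lambda>\<omega>. \<phi> (X i \<omega>) * indicator (Aset t i) \<omega>) = integral\<^sup>L M (\<lambda>\<omega>. \<phi> (X i \<omega>) * ?g \<omega>)"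
    by (rule Bochner_Integration.integral_cong) (auto simp: eq2)
  also have "\<dots> = integral\<^sup>L M (\<lambda>\<omega>. \<phi> (X i \<omega>)) * integral\<^sup>L M ?g"
    by (rule indep_var_lebesgue_integral[OF ind inti intg])
  finally show "integral\<^sup>L M (\<lambda>\<omega>. \<phi> (X i \<omega>) * indicator (Aset t i) \<omega>) = integral\<^sup>L M (\<lambda>\<omega>. \<phi> (X 0 \<omega>)) * measure M (Aset t i)"
    by (simp add: EXi Eg)
qed


lemma renewal_val: "x \<ge> 0 \<Longrightarrow> (\<Sum>i. emeasure M {\<omega> \<in> space M. arrival_time tau i \<omega> \<le> x}) = ennreal (lam * x powr alpha / Gamma (1 + alpha))"
  using FP unfolding fractional_poisson_def renewal_function_def by auto

definition Nm :: "real measure" where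
  "Nm = distr (count_space UNIV \<Otimes>\<^sub>M M) borel (\<lambda>(i, \<omega>). arrival_time tau i \<omega>)"

lemma meas_Tpair[measurable]: "(\<lambda>(i, \<omega>). arrival_time tau i \<omega>) \<in> count_space UNIV \<Otimes>\<^sub>M M \<rightarrow>\<^sub>M borel"
  by (rule measurable_pair_measure_countable1) auto

lemma sets_Nm[simp, measurable_cong]: "sets Nm = sets borel"
  by (simp add: Nm_def)

lemma Nm_nn:
  assumes [measurable]: "g \<in> borel_measurable borel"
  shows "(\<integral>\<^sup>+s. g s \<partial>Nm) = (\<Sum>i. \<integral>\<^sup>+\<omega>. g (arrival_time tau i \<omega>) \<partial>M)"
proof -
  have "(\<integral>\<^sup>+s. g s \<partial>Nm) = (\<integral>\<^sup>+p. g ((\<lambda>(i, \<omega>). arrival_time tau i \<omega>) p) \<partial>(count_space UNIV \<Otimes>\<^sub>M M))"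
    unfolding Nm_def by (rule nn_integral_distr) auto
  also have "\<dots> = (\<integral>\<^sup>+i. \<integral>\<^sup>+\<omega>. g (arrival_time tau i \<omega>) \<partial>M \<partial>count_space UNIV)"
  proof -
    have meas: "(\<lambda>p. g (case p of (i, \<omega>) \<Rightarrow> arrival_time tau i \<omega>)) \<in> borel_measurable (count_space UNIV \<Otimes>\<^sub>M M)"
      by measurable
    show ?thesis using nn_integral_fst[OF meas] by simp
  qed
  also have "\<dots> = (\<Sum>i. \<integral>\<^sup>+\<omega>. g (arrival_time tau i \<omega>) \<partial>M)"
    by (rule nn_integral_count_space_nat)
  finally show ?thesis .
qed

lemma Nm_emeasure:
  assumes [measurable]: "B \<in> sets borel"
  shows "emeasure Nm B = (\<Sum>i. emeasure M {\<omega> \<in> space M. arrival_time tau i \<omega> \<in> B})"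
proof -
  have "emeasure Nm B = (\<integral>\<^sup>+s. indicator B s \<partial>Nm)" by simp
  also have "\<dots> = (\<Sum>i. \<integral>\<^sup>+\<omega>. indicator B (arrival_time tau i \<omega>) \<partial>M)"
    by (rule Nm_nn) measurable
  also have "\<dots> = (\<Sum>i. emeasure M {\<omega> \<in> space M. arrival_time tau i \<omega> \<in> B})"
  proof (rule arg_cong[where f=suminf], rule ext)
    fix i
    have "(\<integral>\<^sup>+\<omega>. indicator B (arrival_time tau i \<omega>) \<partial>M) = (\<integral>\<^sup>+\<omega>. indicator {\<omega> \<in> space M. arrival_time tau i \<omega> \<in> B} \<omega> \<partial>M)"
      by (rule nn_integral_cong) (auto simp: indicator_def)
    then show "(\<integral>\<^sup>+\<omega>. indicator B (arrival_time tau i \<omega>) \<partial>M) = emeasure M {\<omega> \<in> space M. arrival_time tau i \<omega> \<in> B}"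
      by simp
  qed
  finally show ?thesis .
qed

lemma Nm_atMost: "emeasure Nm {..x} = ennreal (if x < 0 then 0 else lam * x powr alpha / Gamma (1 + alpha))"
proof (cases "x < 0")
  case False
  then show ?thesis using renewal_val[of x] by (simp add: Nm_emeasure)
next
  case True
  have "emeasure Nm {..x} \<le> emeasure Nm {..0}"
    using True by (intro emeasure_mono) auto
  also have "\<dots> = 0" using renewal_val[of 0] al by (simp add: Nm_emeasure)
  finally show ?thesis using True by simp
qed


definition mp :: "real \<Rightarrow> real" where
  "mp s = lam / Gamma alpha * s powr (alpha - 1)"

lemma meas_mp[measurable]: "mp \<in> borel_measurable borel"
  unfolding mp_def by measurable

definition Dm :: "real \<Rightarrow> real measure" where
  "Dm t = density lborel (\<lambda>s. indicator {0..t} s * ennreal (mp s))"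

definition Ntr :: "real \<Rightarrow> real measure" where
  "Ntr t = density Nm (indicator {..t})"

lemma Gamma_1_alpha: "Gamma (1 + alpha) = alpha * Gamma alpha"
  using Gamma_plus1[of alpha] al by (simp add: add.commute nonpos_Ints_def)

lemma Dm_atMost:
  assumes "t \<ge> 0"
  shows "emeasure (Dm t) {..x} = ennreal (if x < 0 then 0 else lam * (min x t) powr alpha / Gamma (1 + alpha))"
proof -
  have "emeasure (Dm t) {..x} = (\<integral>\<^sup>+s. indicator {0..t} s * ennreal (mp s) * indicator {..x} s \<partial>lborel)"
    unfolding Dm_def by (subst emeasure_density) auto
  also have "\<dots> = (\<integral>\<^sup>+s. ennreal (lam / Gamma alpha) * (indicator {0..min x t} s * ennreal (s powr (alpha - 1))) \<partial>lborel)"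
  proof (rule nn_integral_cong)
    fix s
    have "ennreal (mp s) = ennreal (lam / Gamma alpha) * ennreal (s powr (alpha - 1))"
      unfolding mp_def using lam al by (subst ennreal_mult[symmetric]) auto
    then show "indicator {0..t} s * ennreal (mp s) * indicator {..x} s = ennreal (lam / Gamma alpha) * (indicator {0..min x t} s * ennreal (s powr (alpha - 1)))"
      by (auto simp: indicator_def)
  qed
  also have "\<dots> = ennreal (if x < 0 then 0 else lam * (min x t) powr alpha / Gamma (1 + alpha))"
  proof (cases "x < 0")
    case True
    then have "{0..min x t} = {}" by auto
    then show ?thesis using True by simp
  next
    case False
    then have "min x t \<ge> 0" using assms by simp
    then have "(\<integral>\<^sup>+s. ennreal (lam / Gamma alpha) * (indicator {0..min x t} s * ennreal (s powr (alpha - 1))) \<partial>lborel)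
        = ennreal (lam / Gamma alpha) * ennreal ((min x t) powr alpha / alpha)"
      by (subst nn_integral_cmult) (auto simp: powr_nn_integral al)
    also have "\<dots> = ennreal (lam * (min x t) powr alpha / Gamma (1 + alpha))"
      using lam al by (simp add: ennreal_mult'[symmetric] Gamma_1_alpha)
    finally show ?thesis using False by simp
  qed
  finally show ?thesis .
qed

lemma Ntr_atMost:
  assumes "t \<ge> 0"
  shows "emeasure (Ntr t) {..x} = ennreal (if x < 0 then 0 else lam * (min x t) powr alpha / Gamma (1 + alpha))"
proof -
  have "emeasure (Ntr t) {..x} = (\<integral>\<^sup>+s. indicator {..t} s * indicator {..x} s \<partial>Nm)"
    unfolding Ntr_def by (subst emeasure_density) auto
  also have "\<dots> = (\<integral>\<^sup>+s. indicator {..min x t} s \<partial>Nm)"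
    by (rule nn_integral_cong) (auto simp: indicator_def)
  also have "\<dots> = emeasure Nm {..min x t}" by simp
  also have "\<dots> = ennreal (if x < 0 then 0 else lam * (min x t) powr alpha / Gamma (1 + alpha))"
    using assms by (auto simp: Nm_atMost)
  finally show ?thesis .
qed

lemma Ntr_eq_Dm:
  assumes "t \<ge> 0"
  shows "Ntr t = Dm t"
proof (rule cdf_unique')
  have FMNtr: "finite_measure (Ntr t)"
  proof -
    have "emeasure (Ntr t) (space (Ntr t)) = emeasure (Ntr t) {..t}"
    proof -
      have "emeasure (Ntr t) UNIV = (\<integral>\<^sup>+s. indicator {..t} s * indicator UNIV s \<partial>Nm)"
        unfolding Ntr_def by (subst emeasure_density) auto
      also have "\<dots> = (\<integral>\<^sup>+s. indicator {..t} s * indicator {..t} s \<partial>Nm)"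
        by (rule nn_integral_cong) (auto simp: indicator_def)
      also have "\<dots> = emeasure (Ntr t) {..t}"
        unfolding Ntr_def by (subst emeasure_density) auto
      finally show ?thesis by (simp add: Ntr_def Nm_def)
    qed
    then show "finite_measure (Ntr t)" using Ntr_atMost[OF assms, of t] by (intro finite_measureI) simp
  qed
  show "finite_borel_measure (Ntr t)"
    by (rule finite_borel_measure.intro[OF FMNtr]) (simp add: finite_borel_measure_axioms_def Ntr_def)
  have FMDm: "finite_measure (Dm t)"
  proof -
    have "emeasure (Dm t) (space (Dm t)) = emeasure (Dm t) {..t}"
    proof -
      have "emeasure (Dm t) UNIV = (\<integral>\<^sup>+s. indicator {0..t} s * ennreal (mp s) * indicator UNIV s \<partial>lborel)"
        unfolding Dm_def by (subst emeasure_density) auto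
      also have "\<dots> = (\<integral>\<^sup>+s. indicator {0..t} s * ennreal (mp s) * indicator {..t} s \<partial>lborel)"
        by (rule nn_integral_cong) (auto simp: indicator_def)
      also have "\<dots> = emeasure (Dm t) {..t}"
        unfolding Dm_def by (subst emeasure_density) auto
      finally show ?thesis by (simp add: Dm_def)
    qed
    then show "finite_measure (Dm t)" using Dm_atMost[OF assms, of t] by (intro finite_measureI) simp
  qed
  show "finite_borel_measure (Dm t)"
    by (rule finite_borel_measure.intro[OF FMDm]) (simp add: finite_borel_measure_axioms_def Dm_def)
  then interpret D: finite_borel_measure "Dm t" .
  have "finite_borel_measure (Ntr t)" by fact
  then interpret N: finite_borel_measure "Ntr t" .
  show "cdf (Ntr t) = cdf (Dm t)"
  proof
    fix x
    show "cdf (Ntr t) x = cdf (Dm t) x"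
      unfolding cdf_def N.emeasure_eq_measure[symmetric] D.emeasure_eq_measure[symmetric]
      using Ntr_atMost[OF assms, of x] Dm_atMost[OF assms, of x]
      by (simp add: measure_def)
  qed
qed


lemma meas_Wb[measurable]: "Wb t \<in> borel_measurable borel"
  unfolding Wb_def by measurable

lemma sum_emeasure_A:
  assumes "t \<ge> 0"
  shows "(\<Sum>i. emeasure M (Aset t i)) = (\<integral>\<^sup>+s. indicator {0..t} s * ennreal (mp s) * (indicator {..t} s * ennreal (Wb t s)) \<partial>lborel)"
proof -
  define h where "h s = indicator {..t} s * ennreal (Wb t s)" for s
  have [measurable]: "h \<in> borel_measurable borel" unfolding h_def by measurable
  have "(\<Sum>i. emeasure M (Aset t i)) = (\<Sum>i. \<integral>\<^sup>+\<omega>. h (arrival_time tau i \<omega>) \<partial>M)"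
  proof (rule arg_cong[where f=suminf], rule ext)
    fix i
    show "emeasure M (Aset t i) = (\<integral>\<^sup>+\<omega>. h (arrival_time tau i \<omega>) \<partial>M)"
      unfolding Aset_def emeasure_A h_def[symmetric]
      by (rule nn_integral_distr) auto
  qed
  also have "\<dots> = (\<integral>\<^sup>+s. h s \<partial>Nm)" by (rule Nm_nn[symmetric]) simp
  also have "\<dots> = (\<integral>\<^sup>+s. indicator {..t} s * h s \<partial>Nm)"
    by (rule nn_integral_cong) (auto simp: h_def indicator_def)
  also have "\<dots> = (\<integral>\<^sup>+s. h s \<partial>Ntr t)"
    unfolding Ntr_def by (rule nn_integral_density[symmetric]) auto
  also have "\<dots> = (\<integral>\<^sup>+s. h s \<partial>Dm t)" by (simp add: Ntr_eq_Dm assms)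
  also have "\<dots> = (\<integral>\<^sup>+s. indicator {0..t} s * ennreal (mp s) * h s \<partial>lborel)"
    unfolding Dm_def by (rule nn_integral_density) auto
  finally show ?thesis by (simp add: h_def)
qed


lemma meas_gI[measurable]: "gI a e \<in> borel_measurable borel"
  unfolding gI_def by measurable

lemma JI_nn:
  assumes "0 \<le> u" "u < 1"
  shows "(\<integral>\<^sup>+y. ennreal (indicator {0..u} y * gI alpha eta y) \<partial>lborel) = ennreal (JI alpha eta u)"
proof -
  have "(gI alpha eta has_integral JI alpha eta u) {0..u}"
    unfolding JI_def using gI_integrable_on[of alpha eta u] al et assms by (simp add: integrable_integral)
  then show ?thesis
    by (rule nn_integral_has_integral_lebesgue[rotated]) (simp add: gI_nonneg)
qed

lemma pointwise_subst:
  assumes t: "t > 0" and y: "0 \<le> y" "y \<le> t / (theta + t)"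
  shows "(theta + t) * (mp ((theta + t) * y) * Wb t ((theta + t) * y))
       = lam * theta powr eta / (Gamma alpha * (theta + t) powr (eta - alpha)) * gI alpha eta y"
proof -
  define c where "c = theta + t"
  have c: "c > 0" using t th by (simp add: c_def)
  have "y * c \<le> t" using y(2) c by (simp add: c_def field_simps)
  then have "y * c < c" using th by (simp add: c_def)
  then have y1: "y < 1" using c by (simp add: mult_less_cancel_right2)
  have d: "theta + (t - c * y) = c * (1 - y)" by (simp add: c_def algebra_simps)
  have e1: "(c * y) powr (alpha - 1) = (c powr alpha / c) * y powr (alpha - 1)"
    using c y by (simp add: powr_mult powr_diff)
  have e2: "(theta / (c * (1 - y))) powr eta = theta powr eta / (c powr eta * (1 - y) powr eta)"
    using c y1 th by (simp add: powr_divide powr_mult)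
  have e3: "c powr (eta - alpha) = c powr eta / c powr alpha" by (simp add: powr_diff)
  have e4: "(1 - y) powr (- eta) = 1 / (1 - y) powr eta" by (simp add: powr_minus divide_inverse)
  have p: "c powr eta > 0" "c powr alpha > 0" "(1 - y) powr eta > 0" "Gamma alpha > 0"
    using c y1 al by auto
  show ?thesis unfolding c_def[symmetric] mp_def Wb_def d gI_def
    unfolding e1 e2 e3 e4 using c p by (simp add: field_simps)
qed

lemma subst_integral:
  assumes t: "t > 0"
  shows "(\<integral>\<^sup>+s. indicator {0..t} s * ennreal (mp s) * (indicator {..t} s * ennreal (Wb t s)) \<partial>lborel)
       = ennreal (lam * theta powr eta / (Gamma alpha * (theta + t) powr (eta - alpha)) * JI alpha eta (t / (theta + t)))"
proof -
  define c where "c = theta + t"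
  define u where "u = t / c"
  define K where "K = lam * theta powr eta / (Gamma alpha * c powr (eta - alpha))"
  have c: "c > 0" using t th by (simp add: c_def)
  have u: "0 \<le> u" "u < 1" using t th c by (auto simp: u_def c_def divide_simps)
  have K: "K \<ge> 0" using lam al th c by (simp add: K_def)
  define f where "f s = indicator {0..t} s * mp s * Wb t s" for s
  have [measurable]: "f \<in> borel_measurable borel" unfolding f_def by measurable
  have mp0: "s \<ge> 0 \<Longrightarrow> mp s \<ge> 0" for s using lam al by (simp add: mp_def)
  have Wb0: "Wb t s \<ge> 0" for s by (simp add: Wb_def)
  have "(\<integral>\<^sup>+s. indicator {0..t} s * ennreal (mp s) * (indicator {..t} s * ennreal (Wb t s)) \<partial>lborel)
      = (\<integral>\<^sup>+s. ennreal (f s) \<partial>lborel)"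
    by (rule nn_integral_cong) (auto simp: f_def indicator_def ennreal_mult mp0 Wb0)
  also have "\<dots> = ennreal \<bar>c\<bar> * (\<integral>\<^sup>+y. ennreal (f (0 + c * y)) \<partial>lborel)"
    by (rule nn_integral_real_affine) (use c in auto)
  also have "\<dots> = (\<integral>\<^sup>+y. ennreal (c * f (c * y)) \<partial>lborel)"
    using c by (subst nn_integral_cmult[symmetric]) (auto simp: ennreal_mult'[symmetric] f_def mp0 Wb0)
  also have "\<dots> = (\<integral>\<^sup>+y. ennreal K * ennreal (indicator {0..u} y * gI alpha eta y) \<partial>lborel)"
  proof (rule nn_integral_cong)
    fix y
    have iff: "c * y \<in> {0..t} \<longleftrightarrow> y \<in> {0..u}"
      using c by (auto simp: u_def field_simps zero_le_mult_iff)
    show "ennreal (c * f (c * y)) = ennreal K * ennreal (indicator {0..u} y * gI alpha eta y)"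
    proof (cases "y \<in> {0..u}")
      case True
      then have "c * f (c * y) = K * gI alpha eta y"
        using iff pointwise_subst[OF t, of y] by (simp add: f_def K_def c_def u_def)
      then show ?thesis using True K by (simp add: ennreal_mult gI_nonneg)
    next
      case False
      then show ?thesis using iff by (simp add: f_def)
    qed
  qed
  also have "\<dots> = ennreal K * ennreal (JI alpha eta u)"
    by (subst nn_integral_cmult) (auto simp: JI_nn u)
  also have "\<dots> = ennreal (K * JI alpha eta u)"
    using K by (simp add: ennreal_mult')
  finally show ?thesis by (simp add: K_def c_def u_def)
qed



end
context zsetup
begin
interpretation prob_space M by (rule P)
lemma JI_nonneg: "0 \<le> u \<Longrightarrow> u < 1 \<Longrightarrow> JI alpha eta u \<ge> 0"
  unfolding JI_def using gI_integrable_on[of alpha eta u] al et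
  by (intro Henstock_Kurzweil_Integration.integral_nonneg) (auto simp: gI_nonneg)

lemma EZ:
  assumes t: "t > 0"
  shows "integral\<^sup>L M (Zproc tau X L t) =
     mu1 * (lam * theta powr eta / (Gamma alpha * (theta + t) powr (eta - alpha)) * JI alpha eta (t / (theta + t)))"
proof -
  define V where "V = lam * theta powr eta / (Gamma alpha * (theta + t) powr (eta - alpha)) * JI alpha eta (t / (theta + t))"
  have u: "0 \<le> t / (theta + t)" "t / (theta + t) < 1" using t th by (auto simp: divide_simps)
  have V0: "V \<ge> 0" unfolding V_def using lam al th t JI_nonneg[OF u] by simp
  define p where "p i = measure M (Aset t i)" for i
  have p0: "p i \<ge> 0" for i by (simp add: p_def)
  have sumE: "(\<Sum>i. ennreal (p i)) = ennreal V"
  proof -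
    have "(\<Sum>i. ennreal (p i)) = (\<Sum>i. emeasure M (Aset t i))"
      by (simp add: p_def emeasure_eq_measure)
    also have "\<dots> = (\<integral>\<^sup>+s. indicator {0..t} s * ennreal (mp s) * (indicator {..t} s * ennreal (Wb t s)) \<partial>lborel)"
      by (rule sum_emeasure_A) (use t in simp)
    also have "\<dots> = ennreal V" unfolding V_def by (rule subst_integral[OF t])
    finally show ?thesis .
  qed
  have sp: "summable p"
  proof (rule summable_suminf_not_top)
    show "0 \<le> p i" for i by (rule p0)
    show "(\<Sum>i. ennreal (p i)) \<noteq> \<top>" unfolding sumE by simp
  qed
  have sumV: "(\<Sum>i. p i) = V"
  proof -
    have A: "ennreal (\<Sum>i. p i) = ennreal V" using suminf_ennreal2[OF p0 sp] sumE by simp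
    have "0 \<le> (\<Sum>i. p i)" by (rule suminf_nonneg[OF sp p0])
    then show ?thesis using A V0 by simp
  qed
  define F where "F i \<omega> = X i \<omega> * indicator (Aset t i) \<omega>" for i \<omega>
  have [measurable]: "F i \<in> borel_measurable M" for i unfolding F_def by measurable
  have intF: "integrable M (F i)" for i
    unfolding F_def using EXA(1)[of "\<lambda>x. x" i t] XI by simp
  have EF: "integral\<^sup>L M (F i) = mu1 * p i" for i
    unfolding F_def p_def MU using EXA(2)[of "\<lambda>x. x" i t] XI by simp
  have intXa: "integrable M (\<lambda>\<omega>. \<bar>X 0 \<omega>\<bar>)" using XI by simp
  have EnF: "(\<integral>\<omega>. norm (F i \<omega>) \<partial>M) = (\<integral>\<omega>. \<bar>X 0 \<omega>\<bar> \<partial>M) * p i" for i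
  proof -
    have "(\<integral>\<omega>. norm (F i \<omega>) \<partial>M) = (\<integral>\<omega>. \<bar>X i \<omega>\<bar> * indicator (Aset t i) \<omega> \<partial>M)"
      by (rule Bochner_Integration.integral_cong) (auto simp: F_def indicator_def)
    also have "\<dots> = (\<integral>\<omega>. \<bar>X 0 \<omega>\<bar> \<partial>M) * p i"
      unfolding p_def using EXA(2)[of "abs" i t] intXa by simp
    finally show ?thesis .
  qed
  have snF: "summable (\<lambda>i. \<integral>\<omega>. norm (F i \<omega>) \<partial>M)"
    unfolding EnF by (intro summable_mult sp)
  have AEs: "AE \<omega> in M. summable (\<lambda>i. norm (F i \<omega>))"
  proof -
    have "(\<integral>\<^sup>+\<omega>. (\<Sum>i. ennreal (norm (F i \<omega>))) \<partial>M) = (\<Sum>i. \<integral>\<^sup>+\<omega>. ennreal (norm (F i \<omega>)) \<partial>M)"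
      by (rule nn_integral_suminf) auto
    also have "\<dots> = (\<Sum>i. ennreal (\<integral>\<omega>. norm (F i \<omega>) \<partial>M))"
      by (intro arg_cong[where f=suminf] ext nn_integral_eq_integral integrable_norm intF) auto
    also have "\<dots> \<noteq> \<infinity>"
    proof -
      have "0 \<le> (\<integral>\<omega>. norm (F i \<omega>) \<partial>M)" for i by simp
      from ennreal_suminf_neq_top[OF snF this] show ?thesis by (simp only: top_ennreal_def infinity_ennreal_def not_False_eq_True)
    qed
    finally have "AE \<omega> in M. (\<Sum>i. ennreal (norm (F i \<omega>))) \<noteq> \<infinity>"
      by (intro nn_integral_noteq_infinite) auto
    then show ?thesis
      by eventually_elim (rule summable_suminf_not_top, auto)
  qed
  have "integral\<^sup>L M (Zproc tau X L t) = (\<integral>\<omega>. (\<Sum>i. F i \<omega>) \<partial>M)"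
    by (rule Bochner_Integration.integral_cong)
       (auto simp: Zproc_def F_def Aset_def indicator_def intro!: suminf_cong)
  also have "\<dots> = (\<Sum>i. integral\<^sup>L M (F i))"
    by (rule integral_suminf[OF intF AEs snF])
  also have "\<dots> = (\<Sum>i. mu1 * p i)" by (simp add: EF)
  also have "\<dots> = mu1 * V" using suminf_mult[OF sp, of mu1] sumV by simp
  finally show ?thesis unfolding V_def .
qed

end

theorem proposition5:
  fixes M :: "'a measure" and tau X L :: "nat \<Rightarrow> 'a \<Rightarrow> real"
    and lam alpha theta eta mu1 :: real
  assumes "prob_space M"
    and "lam > 0" and "0 < alpha" and "alpha \<le> 1"
    and "theta > 0" and "eta > 0"
    and "fractional_poisson M lam alpha tau"
    and "prob_space.indep_vars M (\<lambda>_. borel)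
           (\<lambda>(j::nat, i). if j = 0 then tau i else if j = 1 then X i else L i) ({0,1,2} \<times> UNIV)"
    and "\<And>i. distr M borel (X i) = distr M borel (X 0)"
    and "integrable M (X 0)" and "mu1 = integral\<^sup>L M (X 0)"
    and "\<And>i x. x \<ge> 0 \<Longrightarrow>
           measure M {\<omega> \<in> space M. L i \<omega> > x} = (theta / (theta + x)) powr eta"
  shows "(\<forall>t>0. integral\<^sup>L M (Zproc tau X L t) =
            mu1 * lam * theta powr eta / (Gamma alpha * (theta + t) powr (eta - alpha)) *
            (LBINT y=0..t / (theta + t). (1 - y) powr (- eta) * y powr (alpha - 1)))
       \<and> (eta < 1 \<longrightarrow> (\<lambda>t. integral\<^sup>L M (Zproc tau X L t)) \<sim>[at_top]
            (\<lambda>t. mu1 * lam * theta powr eta * Gamma (1 - eta) / Gamma (alpha + 1 - eta)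
                   * t powr (alpha - eta)))
       \<and> (eta = 1 \<longrightarrow> (\<lambda>t. integral\<^sup>L M (Zproc tau X L t)) \<sim>[at_top]
            (\<lambda>t. mu1 * lam * theta / Gamma alpha * t powr (alpha - 1) * ln t))
       \<and> (eta > 1 \<longrightarrow> (\<lambda>t. integral\<^sup>L M (Zproc tau X L t)) \<sim>[at_top]
            (\<lambda>t. mu1 * lam * theta / ((eta - 1) * Gamma alpha) * t powr (alpha - 1)))"
  proof -
  interpret Z: zsetup M tau X L lam alpha theta eta mu1
    using assms by (simp add: zsetup_def)
  have EZ': "integral\<^sup>L M (Zproc tau X L t) =
      mu1 * lam * theta powr eta / (Gamma alpha * (theta + t) powr (eta - alpha)) * JI alpha eta (t / (theta + t))"
    if "t > 0" for t
    using Z.EZ[OF that] by simp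
  have part1: "\<forall>t>0. integral\<^sup>L M (Zproc tau X L t) =
            mu1 * lam * theta powr eta / (Gamma alpha * (theta + t) powr (eta - alpha)) *
            (LBINT y=0..t / (theta + t). (1 - y) powr (- eta) * y powr (alpha - 1))"
  proof (intro allI impI)
    fix t :: real assume t: "t > 0"
    have u: "0 \<le> t / (theta + t)" "t / (theta + t) < 1" using t assms(5) by (auto simp: divide_simps)
    show "integral\<^sup>L M (Zproc tau X L t) =
            mu1 * lam * theta powr eta / (Gamma alpha * (theta + t) powr (eta - alpha)) *
            (LBINT y=0..t / (theta + t). (1 - y) powr (- eta) * y powr (alpha - 1))"
      using EZ'[OF t] LBINT_eq_JI[OF assms(3) assms(6) u] by simp
  qed
  note part2 = asymp_part[OF assms(3) assms(5) assms(6) EZ']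
  show ?thesis using part1 part2 by blast
qed

end
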